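(* For every $k\in\mathbb N$ and $\mu\in\{0,\dots,L-1\}$, let $Q$ be a matrix whose columns form an orthonormal basis of $\operatorname{range}(W_{k,\mu+1})$. Then $$f(v_{k,\mu+1})-f(v_{k,\mu})=-\frac{1}{2\|b\|^2}\big\langle Q(Q^TAQ)^{-1}Q^Tr_{k,\mu},\,r_{k,\mu}\big\rangle .$$
   Context: Let $\mathcal V=\bigotimes_{\nu=1}^d\mathbb R^{m_\nu}\cong\mathbb R^N$ with the Euclidean inner product $\langle\cdot,\cdot\rangle$ and norm $\|\cdot\|$. Let $A\in\mathbb R^{N\times N}$ be symmetric positive definite, $b\in\mathcal V\setminus\{0\}$, $f(v)=\frac{1}{\|b\|^2}(\frac12\langle Av,v\rangle-\langle b,v\rangle)$. Let $L\ge d$, $P_1,\dots,P_L$ finite-dimensional real inner product spaces, $P=P_1\times\dots\times P_L$, $U:P\to\mathcal V$ multilinear, $F=f\circ U$. For $\mathbf p\in P$, $W_{\mu,\mathbf p^{[\mu]}}:P_\mu\to\mathcal V$ is $q\mapsto U(p_1,\dots,p_{\mu-1},q,p_{\mu+1},\dots,p_L)$; $X^T$ transpose, $X^+$ pseudoinverse (w.r.t. orthonormal bases). ALS: choose $\mathbf p_1=(p_1^1,\dots,p_L^1)\in P$; for $k=1,2,\dots$ and $\mu=1,\dots,L$ in order, $W_{k,\mu}:=W_{\mu,(p_1^{k+1},\dots,p_{\mu-1}^{k+1},p_{\mu+1}^k,\dots,p_L^k)}$ and $p_\mu^{k+1}:=(W_{k,\mu}^TAW_{k,\mu})^+W_{k,\mu}^Tb$.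 For $\mu\in\{0,\dots,L\}$ put $v_{k,\mu}=U(p_1^{k+1},\dots,p_\mu^{k+1},p_{\mu+1}^k,\dots,p_L^k)$ and $r_{k,\mu}=b-Av_{k,\mu}$. *)

theory Defs
  imports "Jordan_Normal_Form.Matrix"
begin

definition pinv_mat :: "real mat \<Rightarrow> real mat" where
  "pinv_mat M = (THE X. X \<in> carrier_mat (dim_col M) (dim_row M) \<and>
      M * X * M = M \<and> X * M * X = X \<and>
      transpose_mat (M * X) = M * X \<and> transpose_mat (X * M) = X * M)"

definition inv_mat :: "real mat \<Rightarrow> real mat" where
  "inv_mat M = (THE X. X \<in> carrier_mat (dim_row M) (dim_row M) \<and>
      M * X = 1\<^sub>m (dim_row M) \<and> X * M = 1\<^sub>m (dim_row M))"

definition spd :: "nat \<Rightarrow> real mat \<Rightarrow> bool" where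
  "spd N A \<longleftrightarrow> A \<in> carrier_mat N N \<and> transpose_mat A = A \<and>
     (\<forall>v \<in> carrier_vec N. v \<noteq> 0\<^sub>v N \<longrightarrow> v \<bullet> (A *\<^sub>v v) > 0)"

text \<open>U : P_1 x ... x P_L \<rightarrow> R^N is multilinear, where P_j = R^(n j) and a point of P
  is a function p with p j \<in> carrier_vec (n j) for j \<in> {1..L}.\<close>
definition multilinear_map ::
  "nat \<Rightarrow> (nat \<Rightarrow> nat) \<Rightarrow> nat \<Rightarrow> ((nat \<Rightarrow> real vec) \<Rightarrow> real vec) \<Rightarrow> bool" where
  "multilinear_map L n N U \<longleftrightarrow>
     (\<forall>p. (\<forall>j\<in>{1..L}. p j \<in> carrier_vec (n j)) \<longrightarrow> U p \<in> carrier_vec N) \<and>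
     (\<forall>p mu. (\<forall>j\<in>{1..L}. p j \<in> carrier_vec (n j)) \<longrightarrow> mu \<in> {1..L} \<longrightarrow>
        (\<forall>x \<in> carrier_vec (n mu). \<forall>y \<in> carrier_vec (n mu). \<forall>a b :: real.
           U (p(mu := a \<cdot>\<^sub>v x + b \<cdot>\<^sub>v y)) = a \<cdot>\<^sub>v U (p(mu := x)) + b \<cdot>\<^sub>v U (p(mu := y))))"

definition W_map :: "((nat \<Rightarrow> real vec) \<Rightarrow> real vec) \<Rightarrow> (nat \<Rightarrow> real vec) \<Rightarrow> nat \<Rightarrow> real vec \<Rightarrow> real vec" where
  "W_map U p mu q = U (p(mu := q))"

definition W_mat :: "((nat \<Rightarrow> real vec) \<Rightarrow> real vec) \<Rightarrow> (nat \<Rightarrow> nat) \<Rightarrow> nat \<Rightarrow>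
    (nat \<Rightarrow> real vec) \<Rightarrow> nat \<Rightarrow> real mat" where
  "W_mat U n N p mu = mat N (n mu) (\<lambda>(i, j). W_map U p mu (unit_vec (n mu) j) $ i)"

definition als_update :: "real mat \<Rightarrow> real vec \<Rightarrow> ((nat \<Rightarrow> real vec) \<Rightarrow> real vec) \<Rightarrow>
    (nat \<Rightarrow> nat) \<Rightarrow> nat \<Rightarrow> (nat \<Rightarrow> real vec) \<Rightarrow> nat \<Rightarrow> (nat \<Rightarrow> real vec)" where
  "als_update A b U n N p mu =
     (let W = W_mat U n N p mu
      in p(mu := pinv_mat (transpose_mat W * A * W) *\<^sub>v (transpose_mat W *\<^sub>v b)))"

primrec als_part :: "real mat \<Rightarrow> real vec \<Rightarrow> ((nat \<Rightarrow> real vec) \<Rightarrow> real vec) \<Rightarrow>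
    (nat \<Rightarrow> nat) \<Rightarrow> nat \<Rightarrow> (nat \<Rightarrow> real vec) \<Rightarrow> nat \<Rightarrow> (nat \<Rightarrow> real vec)" where
  "als_part A b U n N p0 0 = p0"
| "als_part A b U n N p0 (Suc mu) = als_update A b U n N (als_part A b U n N p0 mu) (Suc mu)"

text \<open>als_start ... p1 k = the iterate p_k (paper indexing, k \<ge> 1; p_1 is the initial point).\<close>
fun als_start :: "real mat \<Rightarrow> real vec \<Rightarrow> ((nat \<Rightarrow> real vec) \<Rightarrow> real vec) \<Rightarrow>
    (nat \<Rightarrow> nat) \<Rightarrow> nat \<Rightarrow> nat \<Rightarrow> (nat \<Rightarrow> real vec) \<Rightarrow> nat \<Rightarrow> (nat \<Rightarrow> real vec)" where
  "als_start A b U n N L p1 0 = p1"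
| "als_start A b U n N L p1 (Suc 0) = p1"
| "als_start A b U n N L p1 (Suc (Suc k)) = als_part A b U n N (als_start A b U n N L p1 (Suc k)) L"

text \<open>The tuple (p_1^{k+1},...,p_mu^{k+1},p_{mu+1}^k,...,p_L^k), so v_{k,mu} = U of it.\<close>
definition als_state :: "real mat \<Rightarrow> real vec \<Rightarrow> ((nat \<Rightarrow> real vec) \<Rightarrow> real vec) \<Rightarrow>
    (nat \<Rightarrow> nat) \<Rightarrow> nat \<Rightarrow> nat \<Rightarrow> (nat \<Rightarrow> real vec) \<Rightarrow> nat \<Rightarrow> nat \<Rightarrow> (nat \<Rightarrow> real vec)" where
  "als_state A b U n N L p1 k mu = als_part A b U n N (als_start A b U n N L p1 k) mu"

definition f_obj :: "real mat \<Rightarrow> real vec \<Rightarrow> real vec \<Rightarrow> real" where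
  "f_obj A b v = (1 / (b \<bullet> b)) * ((1/2) * ((A *\<^sub>v v) \<bullet> v) - b \<bullet> v)"

end

theory Submission
  imports Defs "Jordan_Normal_Form.Determinant"
begin


lemma cm: "(A::'a mat) \<in> carrier_mat (dim_row A) (dim_col A)" by (rule carrier_matI) auto
lemma cv: "(v::'a vec) \<in> carrier_vec (dim_vec v)" by (rule carrier_vecI) auto

lemma assoc_mm: "dim_col (A::real mat) = dim_row B \<Longrightarrow> dim_col B = dim_row C \<Longrightarrow> A * B * C = A * (B * C)"
  using assoc_mult_mat[OF cm[of A], of B "dim_col B" C "dim_col C"] cm[of B] cm[of C] by metis
lemma marker1: True ..
lemma assoc_mmv: "dim_col (A::real mat) = dim_row B \<Longrightarrow> dim_vec v = dim_col B \<Longrightarrow> (A * B) *\<^sub>v v = A *\<^sub>v (B *\<^sub>v v)"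
  using assoc_mult_mat_vec[OF cm[of A], of B "dim_col B" v] cm[of B] cv[of v] by metis
lemma marker2: True ..
lemma transpose_mm: "dim_col (A::real mat) = dim_row B \<Longrightarrow> transpose_mat (A * B) = transpose_mat B * transpose_mat A"
  using transpose_mult[OF cm[of A], of B "dim_col B"] cm[of B] by metis
lemma marker3: True ..
lemma one_mm_left: "dim_row (A::real mat) = n \<Longrightarrow> 1\<^sub>m n * A = A"
  using left_mult_one_mat[OF cm[of A]] by metis
lemma marker4: True ..
lemma one_mm_right: "dim_col (A::real mat) = n \<Longrightarrow> A * 1\<^sub>m n = A"
  using right_mult_one_mat[OF cm[of A]] by metis
lemma marker5: True ..
lemma one_mv: "dim_vec (v::real vec) = n \<Longrightarrow> 1\<^sub>m n *\<^sub>v v = v"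
  using one_mult_mat_vec[OF cv[of v]] by metis
lemma marker6: True ..
lemma tr_sp: "dim_row (A::real mat) = dim_vec y \<Longrightarrow> dim_col A = dim_vec x \<Longrightarrow>
  (transpose_mat A *\<^sub>v y) \<bullet> x = y \<bullet> (A *\<^sub>v x)"
  using transpose_vec_mult_scalar[OF cm[of A], of x y] cv[of x] cv[of y] by metis
lemma marker7: True ..


lemma mat_eq_vecI:
  assumes A: "(A :: real mat) \<in> carrier_mat nr nc" and B: "B \<in> carrier_mat nr nc"
    and h: "\<And>v. v \<in> carrier_vec nc \<Longrightarrow> A *\<^sub>v v = B *\<^sub>v v"
  shows "A = B"
proof (rule eq_matI)
  fix i j assume i: "i < dim_row B" and j: "j < dim_col B"
  have "(A *\<^sub>v unit_vec nc j) $ i = (B *\<^sub>v unit_vec nc j) $ i" using h by simp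
  then show "A $$ (i,j) = B $$ (i,j)" using A B i j by simp
qed (use A B in auto)

lemma inj_sq_inverse:
  fixes G :: "real mat"
  assumes G: "G \<in> carrier_mat n n"
    and inj: "\<And>v. v \<in> carrier_vec n \<Longrightarrow> G *\<^sub>v v = 0\<^sub>v n \<Longrightarrow> v = 0\<^sub>v n"
  shows "\<exists>H \<in> carrier_mat n n. G * H = 1\<^sub>m n \<and> H * G = 1\<^sub>m n"
proof -
  have "det G \<noteq> 0" using det_0_iff_vec_prod_zero_field[OF G] inj by blast
  from det_non_zero_imp_unit[OF G this, of "()"]
  show ?thesis unfolding Units_def ring_mat_def by auto
qed

lemma inv_mat_eq:
  fixes G H :: "real mat"
  assumes G: "G \<in> carrier_mat n n" and H: "H \<in> carrier_mat n n"
    and GH: "G * H = 1\<^sub>m n" and HG: "H * G = 1\<^sub>m n"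
  shows "inv_mat G = H"
  unfolding inv_mat_def
proof (rule the_equality)
  show "H \<in> carrier_mat (dim_row G) (dim_row G) \<and> G * H = 1\<^sub>m (dim_row G) \<and> H * G = 1\<^sub>m (dim_row G)"
    using assms by auto
next
  fix X assume X: "X \<in> carrier_mat (dim_row G) (dim_row G) \<and> G * X = 1\<^sub>m (dim_row G) \<and> X * G = 1\<^sub>m (dim_row G)"
  then have Xc: "X \<in> carrier_mat n n" and XG: "X * G = 1\<^sub>m n" using G by auto
  have "X = X * (G * H)" using GH Xc by simp
  also have "\<dots> = (X * G) * H" using Xc G H by simp
  also have "\<dots> = H" using XG H by simp
  finally show "X = H" .
qed

lemma pinv_unique:
  fixes M X :: "real mat"
  assumes M: "M \<in> carrier_mat c c" and X: "X \<in> carrier_mat c c"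
    and P1: "M * X * M = M" and P2: "X * M * X = X"
    and P3: "transpose_mat (M * X) = M * X" and P4: "transpose_mat (X * M) = X * M"
  shows "pinv_mat M = X"
  unfolding pinv_mat_def
proof (rule the_equality)
  show "X \<in> carrier_mat (dim_col M) (dim_row M) \<and> M * X * M = M \<and> X * M * X = X \<and>
      transpose_mat (M * X) = M * X \<and> transpose_mat (X * M) = X * M" using assms by auto
next
  fix Y assume "Y \<in> carrier_mat (dim_col M) (dim_row M) \<and> M * Y * M = M \<and> Y * M * Y = Y \<and>
      transpose_mat (M * Y) = M * Y \<and> transpose_mat (Y * M) = Y * M"
  then have Y: "Y \<in> carrier_mat c c" and Q1: "M * Y * M = M" and Q2: "Y * M * Y = Y"
    and Q3: "transpose_mat (M * Y) = M * Y" and Q4: "transpose_mat (Y * M) = Y * M" using M by auto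
  have tM: "transpose_mat M \<in> carrier_mat c c" using M by simp
  have tX: "transpose_mat X \<in> carrier_mat c c" using X by simp
  have tY: "transpose_mat Y \<in> carrier_mat c c" using Y by simp
  have e1: "transpose_mat M = transpose_mat M * (M * Y)"
  proof -
    have "transpose_mat M = transpose_mat (M * Y * M)" using Q1 by simp
    also have "\<dots> = transpose_mat M * transpose_mat (M * Y)"
      using transpose_mult[of "M * Y" c c M c] M Y by simp
    also have "\<dots> = transpose_mat M * (M * Y)" using Q3 by simp
    finally show ?thesis .
  qed
  have e2: "transpose_mat M = (X * M) * transpose_mat M"
  proof -
    have "transpose_mat M = transpose_mat (M * X * M)" using P1 by simp
    also have "\<dots> = transpose_mat (M * (X * M))" using M X by simp
    also have "\<dots> = transpose_mat (X * M) * transpose_mat M"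
      using transpose_mult[of M c c "X * M" c] M X by simp
    also have "\<dots> = (X * M) * transpose_mat M" using P4 by simp
    finally show ?thesis .
  qed
  have "X = X * (M * X)" using P2 M X by simp
  also have "\<dots> = X * transpose_mat (M * X)" using P3 by simp
  also have "\<dots> = X * (transpose_mat X * transpose_mat M)"
    using transpose_mult[of M c c X c] M X by simp
  also have "\<dots> = X * (transpose_mat X * (transpose_mat M * (M * Y)))" using e1 by simp
  also have "\<dots> = X * ((transpose_mat X * transpose_mat M) * M * Y)"
  proof -
    have "(transpose_mat X * transpose_mat M) * M * Y = (transpose_mat X * transpose_mat M) * (M * Y)"
      by (rule assoc_mult_mat[OF mult_carrier_mat[OF tX tM] M Y])
    also have "\<dots> = transpose_mat X * (transpose_mat M * (M * Y))"
      by (rule assoc_mult_mat[OF tX tM mult_carrier_mat[OF M Y]])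
    finally show ?thesis by simp
  qed
  also have "\<dots> = X * (transpose_mat (M * X) * M * Y)"
    using transpose_mult[of M c c X c] M X by simp
  also have "\<dots> = (X * M * X) * M * Y" using P3 M X Y by (simp add: assoc_mult_mat[of _ c c _ c _ c] mult_carrier_mat[of _ c c _ c])
  also have "\<dots> = X * M * Y" using P2 by simp
  finally have xe: "X = X * M * Y" .
  have "Y = (Y * M) * Y" using Q2 by simp
  also have "\<dots> = transpose_mat (Y * M) * Y" using Q4 by simp
  also have "\<dots> = (transpose_mat M * transpose_mat Y) * Y"
    using transpose_mult[of Y c c M c] M Y by simp
  also have "\<dots> = ((X * M) * transpose_mat M * transpose_mat Y) * Y" using e2 by simp
  also have "\<dots> = X * M * (transpose_mat M * transpose_mat Y) * Y"
  proof -
    have "(X * M) * transpose_mat M * transpose_mat Y = (X * M) * (transpose_mat M * transpose_mat Y)"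
      by (rule assoc_mult_mat[OF mult_carrier_mat[OF X M] tM tY])
    then show ?thesis by simp
  qed
  also have "\<dots> = X * M * transpose_mat (Y * M) * Y"
    using transpose_mult[of Y c c M c] M Y by simp
  also have "\<dots> = X * (M * Y * M * Y)" using Q4 M X Y by (simp add: assoc_mult_mat[of _ c c _ c _ c] mult_carrier_mat[of _ c c _ c])
  also have "\<dots> = X * M * Y" using Q1 M X Y by (simp add: assoc_mult_mat[of _ c c _ c _ c] mult_carrier_mat[of _ c c _ c])
  finally show "Y = X" using xe by simp
qed


lemma self_sp_zero: "(v::real vec) \<bullet> v = 0 \<Longrightarrow> v = 0\<^sub>v (dim_vec v)"
proof -
  assume h: "v \<bullet> v = 0"
  have "(\<Sum>i\<in>{0..<dim_vec v}. v $ i * v $ i) = 0" using h unfolding scalar_prod_def by simp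
  moreover have "\<forall>i\<in>{0..<dim_vec v}. 0 \<le> v $ i * v $ i" by simp
  ultimately have "\<forall>i\<in>{0..<dim_vec v}. v $ i * v $ i = 0"
    using sum_nonneg_eq_0_iff[of "{0..<dim_vec v}" "\<lambda>i. v $ i * v $ i"] by blast
  then show ?thesis by (intro eq_vecI) simp_all
qed

lemma mv_zero: "(M::real mat) \<in> carrier_mat nr nc \<Longrightarrow> M *\<^sub>v 0\<^sub>v nc = 0\<^sub>v nr"
  by (intro eq_vecI) auto

lemma G_props:
  fixes A Q :: "real mat"
  assumes A: "A \<in> carrier_mat N N"
    and Apd: "\<forall>v\<in>carrier_vec N. v \<noteq> 0\<^sub>v N \<longrightarrow> v \<bullet> (A *\<^sub>v v) > 0"
    and Q: "Q \<in> carrier_mat N r" and QQ: "transpose_mat Q * Q = 1\<^sub>m r"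
  shows "inv_mat (transpose_mat Q * A * Q) \<in> carrier_mat r r \<and>
    (transpose_mat Q * A * Q) * inv_mat (transpose_mat Q * A * Q) = 1\<^sub>m r \<and>
    inv_mat (transpose_mat Q * A * Q) * (transpose_mat Q * A * Q) = 1\<^sub>m r"
proof -
  let ?G = "transpose_mat Q * A * Q"
  have G: "?G \<in> carrier_mat r r" using A Q by auto
  have inj: "z = 0\<^sub>v r" if z: "z \<in> carrier_vec r" and Gz: "?G *\<^sub>v z = 0\<^sub>v r" for z
  proof -
    have Qz: "Q *\<^sub>v z \<in> carrier_vec N" using Q z by simp
    have "?G *\<^sub>v z = transpose_mat Q *\<^sub>v (A *\<^sub>v (Q *\<^sub>v z))"
      using A Q z by (simp add: assoc_mmv)
    then have "z \<bullet> (transpose_mat Q *\<^sub>v (A *\<^sub>v (Q *\<^sub>v z))) = z \<bullet> (0\<^sub>v r)" using Gz by simp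
    then have "z \<bullet> (transpose_mat Q *\<^sub>v (A *\<^sub>v (Q *\<^sub>v z))) = 0" using z by simp
    moreover have "z \<bullet> (transpose_mat Q *\<^sub>v (A *\<^sub>v (Q *\<^sub>v z))) = (Q *\<^sub>v z) \<bullet> (A *\<^sub>v (Q *\<^sub>v z))"
    proof -
      have "z \<bullet> (transpose_mat Q *\<^sub>v (A *\<^sub>v (Q *\<^sub>v z))) = (transpose_mat Q *\<^sub>v (A *\<^sub>v (Q *\<^sub>v z))) \<bullet> z"
        using z Q A by (intro comm_scalar_prod[of _ r]) auto
      also have "\<dots> = (A *\<^sub>v (Q *\<^sub>v z)) \<bullet> (Q *\<^sub>v z)" using z Q A by (intro tr_sp) auto
      also have "\<dots> = (Q *\<^sub>v z) \<bullet> (A *\<^sub>v (Q *\<^sub>v z))" using z Q A by (intro comm_scalar_prod[of _ N]) auto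
      finally show ?thesis .
    qed
    ultimately have "Q *\<^sub>v z = 0\<^sub>v N" using Apd Qz by force
    then have "transpose_mat Q *\<^sub>v (Q *\<^sub>v z) = 0\<^sub>v r" using Q by (simp add: mv_zero)
    moreover have "transpose_mat Q *\<^sub>v (Q *\<^sub>v z) = z"
      using QQ Q z by (simp add: assoc_mmv[symmetric] one_mv del: assoc_mult_mat_vec)
    ultimately show ?thesis by simp
  qed
  obtain H where H: "H \<in> carrier_mat r r" "?G * H = 1\<^sub>m r" "H * ?G = 1\<^sub>m r"
    using inj_sq_inverse[OF G] inj by blast
  have "inv_mat ?G = H" using inv_mat_eq[OF G H] .
  then show ?thesis using H by simp
qed




lemma inv_sym:
  fixes K S :: "real mat"
  assumes K: "K \<in> carrier_mat r r" and S: "S \<in> carrier_mat r r" and Ks: "transpose_mat K = K"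
    and KS: "K * S = 1\<^sub>m r" and SK: "S * K = 1\<^sub>m r"
  shows "transpose_mat S = S"
proof -
  have St: "transpose_mat S \<in> carrier_mat r r" using S by simp
  have "transpose_mat S * K = 1\<^sub>m r"
    using arg_cong[OF KS, of transpose_mat] transpose_mult[OF K S] Ks by simp
  moreover have "K * transpose_mat S = 1\<^sub>m r"
    using arg_cong[OF SK, of transpose_mat] transpose_mult[OF S K] Ks by simp
  ultimately have "inv_mat K = transpose_mat S" using inv_mat_eq[OF K St] by simp
  moreover have "inv_mat K = S" using inv_mat_eq[OF K S KS SK] .
  ultimately show ?thesis by simp
qed

lemma pinv_construct:
  fixes A W Q :: "real mat"
  assumes A: "A \<in> carrier_mat N N" and Asym: "transpose_mat A = A"
    and Apd: "\<forall>v\<in>carrier_vec N. v \<noteq> 0\<^sub>v N \<longrightarrow> v \<bullet> (A *\<^sub>v v) > 0"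
    and W: "W \<in> carrier_mat N c" and Q: "Q \<in> carrier_mat N r"
    and QQ: "transpose_mat Q * Q = 1\<^sub>m r"
    and sp: "{Q *\<^sub>v x | x. x \<in> carrier_vec r} = {W *\<^sub>v y | y. y \<in> carrier_vec c}"
  shows "pinv_mat (transpose_mat W * A * W) \<in> carrier_mat c c \<and>
    transpose_mat W * A * W * pinv_mat (transpose_mat W * A * W) * (transpose_mat W * A * W) = transpose_mat W * A * W \<and>
    W * pinv_mat (transpose_mat W * A * W) * transpose_mat W = Q * inv_mat (transpose_mat Q * A * Q) * transpose_mat Q"
proof -
  define C where "C = transpose_mat Q * W"
  have C: "C \<in> carrier_mat r c" using Q W unfolding C_def by simp
  have QtQx: "transpose_mat Q *\<^sub>v (Q *\<^sub>v x) = x" if "x \<in> carrier_vec r" for x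
    using QQ Q that by (simp add: assoc_mmv[symmetric] one_mv del: assoc_mult_mat_vec)
  have QC: "Q * C = W"
  proof (rule mat_eq_vecI[of _ N c])
    show "Q * C \<in> carrier_mat N c" using Q C by simp
    show "W \<in> carrier_mat N c" by (rule W)
    fix y :: "real vec" assume y: "y \<in> carrier_vec c"
    then obtain x where x: "x \<in> carrier_vec r" "W *\<^sub>v y = Q *\<^sub>v x" using sp by blast
    have "(Q * C) *\<^sub>v y = Q *\<^sub>v (transpose_mat Q *\<^sub>v (W *\<^sub>v y))"
      using Q W y unfolding C_def by (simp add: assoc_mmv)
    also have "\<dots> = W *\<^sub>v y" using x QtQx by simp
    finally show "(Q * C) *\<^sub>v y = W *\<^sub>v y" .
  qed
  have surj: "\<exists>y\<in>carrier_vec c. C *\<^sub>v y = x" if x: "x \<in> carrier_vec r" for x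
  proof -
    obtain y where y: "y \<in> carrier_vec c" "Q *\<^sub>v x = W *\<^sub>v y" using sp x by blast
    have "C *\<^sub>v y = transpose_mat Q *\<^sub>v (W *\<^sub>v y)" using Q W y unfolding C_def by (simp add: assoc_mmv)
    also have "\<dots> = x" using y(2)[symmetric] QtQx[OF x] by simp
    finally show ?thesis using y by blast
  qed
  define K where "K = C * transpose_mat C"
  have K: "K \<in> carrier_mat r r" using C unfolding K_def by simp
  have Ksym: "transpose_mat K = K" using C unfolding K_def by (simp add: transpose_mm)
  have Kinj: "z = 0\<^sub>v r" if z: "z \<in> carrier_vec r" and Kz: "K *\<^sub>v z = 0\<^sub>v r" for z
  proof -
    have "z \<bullet> (C *\<^sub>v (transpose_mat C *\<^sub>v z)) = 0"
      using Kz z C unfolding K_def by (simp add: assoc_mmv)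
    moreover have "z \<bullet> (C *\<^sub>v (transpose_mat C *\<^sub>v z)) = (transpose_mat C *\<^sub>v z) \<bullet> (transpose_mat C *\<^sub>v z)"
      using z C by (intro tr_sp[symmetric]) auto
    ultimately have Ctz: "transpose_mat C *\<^sub>v z = 0\<^sub>v c"
      using self_sp_zero[of "transpose_mat C *\<^sub>v z"] C by simp
    obtain y where y: "y \<in> carrier_vec c" "C *\<^sub>v y = z" using surj z by blast
    have "z \<bullet> z = (transpose_mat C *\<^sub>v z) \<bullet> y" using y z C by (simp add: tr_sp)
    also have "\<dots> = 0" using Ctz y by simp
    finally show ?thesis using self_sp_zero[of z] z by simp
  qed
  obtain S where S: "S \<in> carrier_mat r r" "K * S = 1\<^sub>m r" "S * K = 1\<^sub>m r"
    using inj_sq_inverse[OF K] Kinj by blast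
  have Ssym: "transpose_mat S = S" using inv_sym[OF K S(1) Ksym S(2) S(3)] .
  define R where "R = transpose_mat C * S"
  have R: "R \<in> carrier_mat c r" using C S unfolding R_def by simp
  have CR: "C * R = 1\<^sub>m r" using C S unfolding R_def K_def by (simp add: assoc_mm[symmetric] del: assoc_mult_mat)
  have RCsym: "transpose_mat C * transpose_mat R = R * C"
    using C S Ssym unfolding R_def by (simp add: transpose_mm assoc_mm)
  have RtCt: "transpose_mat R * transpose_mat C = 1\<^sub>m r"
    using arg_cong[OF CR, of transpose_mat] C R by (simp add: transpose_mm)
  define G where "G = transpose_mat Q * A * Q"
  define H where "H = inv_mat G"
  have GH: "H \<in> carrier_mat r r" "G * H = 1\<^sub>m r" "H * G = 1\<^sub>m r"
    using G_props[OF A Apd Q QQ] unfolding G_def H_def by auto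
  have Gc: "G \<in> carrier_mat r r" using A Q unfolding G_def by simp
  have Gsym: "transpose_mat G = G" using A Q Asym unfolding G_def by (simp add: transpose_mm assoc_mm)
  have Hsym: "transpose_mat H = H" using inv_sym[OF Gc GH(1) Gsym GH(2) GH(3)] .
  define M where "M = transpose_mat W * A * W"
  define X where "X = R * H * transpose_mat R"
  note dims = carrier_matD[OF Q] carrier_matD[OF C] carrier_matD[OF R] carrier_matD[OF GH(1)]
    carrier_matD[OF A] carrier_matD[OF W]
  have r1: "C * (R * Z) = Z" if "dim_row Z = r" for Z
    using CR that dims by (simp add: assoc_mm[symmetric] one_mm_left del: assoc_mult_mat)
  have r2: "transpose_mat R * (transpose_mat C * Z) = Z" if "dim_row Z = r" for Z
    using RtCt that dims by (simp add: assoc_mm[symmetric] one_mm_left del: assoc_mult_mat)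
  have r3: "transpose_mat Q * (A * (Q * (H * Z))) = Z" if "dim_row Z = r" for Z
    using GH(2) that dims unfolding G_def by (simp add: assoc_mm[symmetric] one_mm_left del: assoc_mult_mat)
  have r4: "H * (transpose_mat Q * (A * (Q * Z))) = Z" if "dim_row Z = r" for Z
    using GH(3) that dims unfolding G_def by (simp add: assoc_mm[symmetric] one_mm_left del: assoc_mult_mat)
  have r5: "transpose_mat C * (transpose_mat R * Z) = R * (C * Z)" if "dim_row Z = c" for Z
  proof -
    have "transpose_mat C * (transpose_mat R * Z) = (transpose_mat C * transpose_mat R) * Z"
      using that dims by (intro assoc_mm[symmetric]) auto
    also have "\<dots> = R * (C * Z)" unfolding RCsym using that dims by (intro assoc_mm) auto
    finally show ?thesis .
  qed
  have Mdef: "M = transpose_mat C * (transpose_mat Q * (A * (Q * C)))"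
    unfolding M_def QC[symmetric] using dims by (simp add: transpose_mm assoc_mm)
  have Xc: "X \<in> carrier_mat c c" using R GH(1) unfolding X_def by simp
  have Mc: "M \<in> carrier_mat c c" using A W unfolding M_def by simp
  have P1: "M * X * M = M" unfolding Mdef X_def using dims by (simp add: assoc_mm r1 r2 r3 r4 r5)
  have P2: "X * M * X = X" unfolding Mdef X_def using dims by (simp add: assoc_mm r1 r2 r3 r4 r5)
  have MX: "M * X = R * C" unfolding Mdef X_def using dims RCsym by (simp add: assoc_mm r1 r2 r3 r4 r5)
  have XM: "X * M = R * C" unfolding Mdef X_def using dims by (simp add: assoc_mm r1 r2 r3 r4 r5)
  have RCs: "transpose_mat (R * C) = R * C" using dims RCsym by (simp add: transpose_mm)
  have pe: "pinv_mat M = X"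
    using pinv_unique[OF Mc Xc P1 P2] MX XM RCs by simp
  have WXW: "W * X * transpose_mat W = Q * H * transpose_mat Q"
    unfolding QC[symmetric] X_def using dims Hsym by (simp add: assoc_mm transpose_mm r1 r2)
  show ?thesis using pe Xc P1 WXW unfolding M_def H_def G_def by simp
qed




definition ext_mat :: "real mat \<Rightarrow> real vec \<Rightarrow> real mat" where
  "ext_mat M e = mat (dim_row M) (Suc (dim_col M)) (\<lambda>(i,j). if j < dim_col M then M $$ (i,j) else e $ i)"

definition pad :: "nat \<Rightarrow> real vec \<Rightarrow> real \<Rightarrow> real vec" where
  "pad k y a = vec (Suc k) (\<lambda>j. if j < k then y $ j else a)"

lemma ext_mat_carrier: "M \<in> carrier_mat N k \<Longrightarrow> ext_mat M e \<in> carrier_mat N (Suc k)"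
  unfolding ext_mat_def by auto

lemma pad_carrier: "pad k y a \<in> carrier_vec (Suc k)" unfolding pad_def by simp

lemma ext_mv:
  assumes M: "M \<in> carrier_mat N k" and e: "e \<in> carrier_vec N" and y: "y \<in> carrier_vec (Suc k)"
  shows "ext_mat M e *\<^sub>v y = M *\<^sub>v vec k (\<lambda>j. y $ j) + y $ k \<cdot>\<^sub>v e"
proof (rule eq_vecI)
  show "dim_vec (ext_mat M e *\<^sub>v y) = dim_vec (M *\<^sub>v vec k (\<lambda>j. y $ j) + y $ k \<cdot>\<^sub>v e)"
    using M e unfolding ext_mat_def by simp
  fix i assume "i < dim_vec (M *\<^sub>v vec k (\<lambda>j. y $ j) + y $ k \<cdot>\<^sub>v e)"
  then have i: "i < N" using e by simp
  have "(ext_mat M e *\<^sub>v y) $ i = (\<Sum>j\<in>{0..<Suc k}. (if j < k then M $$ (i,j) else e $ i) * y $ j)"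
    using M y i unfolding ext_mat_def by (simp add: scalar_prod_def)
  also have "\<dots> = (\<Sum>j\<in>{0..<k}. M $$ (i,j) * y $ j) + e $ i * y $ k"
    by simp
  finally show "(ext_mat M e *\<^sub>v y) $ i = (M *\<^sub>v vec k (\<lambda>j. y $ j) + y $ k \<cdot>\<^sub>v e) $ i"
    using M e i by (simp add: scalar_prod_def)
qed

lemma ext_pad:
  assumes M: "M \<in> carrier_mat N k" and e: "e \<in> carrier_vec N" and y: "y \<in> carrier_vec k"
  shows "ext_mat M e *\<^sub>v pad k y a = M *\<^sub>v y + a \<cdot>\<^sub>v e"
proof -
  have "vec k (\<lambda>j. pad k y a $ j) = y" using y unfolding pad_def by (intro eq_vecI) auto
  moreover have "pad k y a $ k = a" unfolding pad_def by simp
  ultimately show ?thesis using ext_mv[OF M e pad_carrier] by simp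
qed

lemma W_ext:
  assumes W: "W \<in> carrier_mat N (Suc c)"
  shows "W = ext_mat (mat N c (\<lambda>(i,j). W $$ (i,j))) (col W c)"
  using W unfolding ext_mat_def by (intro eq_matI) (auto simp: less_Suc_eq)

lemma ortho_ext:
  assumes Q: "Q \<in> carrier_mat N r" and QQ: "transpose_mat Q * Q = 1\<^sub>m r"
    and e: "e \<in> carrier_vec N" and Qe: "transpose_mat Q *\<^sub>v e = 0\<^sub>v r" and ee: "e \<bullet> e = 1"
  shows "transpose_mat (ext_mat Q e) * ext_mat Q e = 1\<^sub>m (Suc r)"
proof (rule eq_matI)
  have E: "ext_mat Q e \<in> carrier_mat N (Suc r)" using ext_mat_carrier[OF Q] .
  show "dim_row (transpose_mat (ext_mat Q e) * ext_mat Q e) = dim_row (1\<^sub>m (Suc r))" using E by simp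
  show "dim_col (transpose_mat (ext_mat Q e) * ext_mat Q e) = dim_col (1\<^sub>m (Suc r))" using E by simp
  fix i j assume i: "i < dim_row (1\<^sub>m (Suc r))" and j: "j < dim_col (1\<^sub>m (Suc r))"
  have colE: "col (ext_mat Q e) l = (if l < r then col Q l else e)" if "l < Suc r" for l
    using that Q e unfolding ext_mat_def by (intro eq_vecI) auto
  have lhs: "(transpose_mat (ext_mat Q e) * ext_mat Q e) $$ (i,j) = col (ext_mat Q e) i \<bullet> col (ext_mat Q e) j"
    using E i j by simp
  have qq: "col Q l \<bullet> col Q m = (if l = m then 1 else 0)" if "l < r" "m < r" for l m
  proof -
    have "(transpose_mat Q * Q) $$ (l,m) = col Q l \<bullet> col Q m" using Q that by simp
    then show ?thesis using QQ that by simp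
  qed
  have qe: "col Q l \<bullet> e = 0" if "l < r" for l
  proof -
    have "(transpose_mat Q *\<^sub>v e) $ l = col Q l \<bullet> e" using Q that by simp
    then show ?thesis using Qe that by simp
  qed
  have eq: "e \<bullet> col Q l = 0" if "l < r" for l
    using qe[OF that] comm_scalar_prod[of e N "col Q l"] e Q that by simp
  show "(transpose_mat (ext_mat Q e) * ext_mat Q e) $$ (i,j) = 1\<^sub>m (Suc r) $$ (i,j)"
    unfolding lhs using i j colE qq qe eq ee by (auto simp: less_Suc_eq)
qed


lemma onb_exists:
  "(W::real mat) \<in> carrier_mat N c \<Longrightarrow> \<exists>r Q. Q \<in> carrier_mat N r \<and> transpose_mat Q * Q = 1\<^sub>m r \<and>
     {Q *\<^sub>v x | x. x \<in> carrier_vec r} = {W *\<^sub>v y | y. y \<in> carrier_vec c}"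
proof (induction c arbitrary: W)
  case 0
  have "transpose_mat W * W = 1\<^sub>m 0" using 0 by (intro eq_matI) auto
  then show ?case using 0 by blast
next
  case (Suc c)
  define W' where "W' = mat N c (\<lambda>(i,j). W $$ (i,j))"
  define w where "w = col W c"
  have W': "W' \<in> carrier_mat N c" unfolding W'_def by simp
  have dW: "dim_row W = N" using Suc.prems by (rule carrier_matD)
  have w: "w \<in> carrier_vec N" unfolding w_def by (rule carrier_vecI) (simp add: dW)
  have Wext: "W = ext_mat W' w" using W_ext[OF Suc.prems] unfolding W'_def w_def .
  obtain r Q' where Q': "Q' \<in> carrier_mat N r" and QQ: "transpose_mat Q' * Q' = 1\<^sub>m r"
    and sp: "{Q' *\<^sub>v x | x. x \<in> carrier_vec r} = {W' *\<^sub>v y | y. y \<in> carrier_vec c}"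
    using Suc.IH[OF W'] by blast
  have inW: "\<exists>y\<in>carrier_vec c. Q' *\<^sub>v x = W' *\<^sub>v y" if "x \<in> carrier_vec r" for x
  proof -
    have "Q' *\<^sub>v x \<in> {Q' *\<^sub>v x | x. x \<in> carrier_vec r}" using that by blast
    then show ?thesis unfolding sp by blast
  qed
  have inQ: "\<exists>x\<in>carrier_vec r. W' *\<^sub>v y = Q' *\<^sub>v x" if "y \<in> carrier_vec c" for y
  proof -
    have "W' *\<^sub>v y \<in> {W' *\<^sub>v y | y. y \<in> carrier_vec c}" using that by blast
    then show ?thesis unfolding sp[symmetric] by blast
  qed
  define t where "t = transpose_mat Q' *\<^sub>v w"
  define u where "u = w - Q' *\<^sub>v t"
  have t: "t \<in> carrier_vec r" unfolding t_def using Q' w by simp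
  have u: "u \<in> carrier_vec N" unfolding u_def using Q' w t by simp
  have QtQ: "transpose_mat Q' *\<^sub>v (Q' *\<^sub>v x) = x" if "x \<in> carrier_vec r" for x
    using QQ Q' that by (simp add: assoc_mmv[symmetric] one_mv del: assoc_mult_mat_vec)
  have Wy: "W *\<^sub>v y = W' *\<^sub>v vec c (\<lambda>j. y $ j) + y $ c \<cdot>\<^sub>v w" if "y \<in> carrier_vec (Suc c)" for y
    unfolding Wext using ext_mv[OF W' w that] .
  have Wpad: "W *\<^sub>v pad c y a = W' *\<^sub>v y + a \<cdot>\<^sub>v w" if "y \<in> carrier_vec c" for y a
    unfolding Wext using ext_pad[OF W' w that] .
  show ?case
  proof (cases "u = 0\<^sub>v N")
    case True
    have wQ: "w = Q' *\<^sub>v t"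
    proof (rule eq_vecI)
      fix i assume i: "i < dim_vec (Q' *\<^sub>v t)"
      then have "u $ i = 0" using True Q' by simp
      then show "w $ i = (Q' *\<^sub>v t) $ i" using i Q' w t unfolding u_def by simp
    qed (use w Q' in simp)
    have "{Q' *\<^sub>v x | x. x \<in> carrier_vec r} = {W *\<^sub>v y | y. y \<in> carrier_vec (Suc c)}"
    proof (rule equalityI; rule subsetI)
      fix v assume "v \<in> {Q' *\<^sub>v x | x. x \<in> carrier_vec r}"
      then obtain x where x: "x \<in> carrier_vec r" "v = Q' *\<^sub>v x" by blast
      obtain y where y: "y \<in> carrier_vec c" "Q' *\<^sub>v x = W' *\<^sub>v y" using inW[OF x(1)] by blast
      have "W *\<^sub>v pad c y 0 = W' *\<^sub>v y" unfolding Wpad[OF y(1)] using W' y(1) w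
        by (intro eq_vecI) auto
      then have "v = W *\<^sub>v pad c y 0" using x y by simp
      then show "v \<in> {W *\<^sub>v y | y. y \<in> carrier_vec (Suc c)}" using pad_carrier by blast
    next
      fix v assume "v \<in> {W *\<^sub>v y | y. y \<in> carrier_vec (Suc c)}"
      then obtain y where y: "y \<in> carrier_vec (Suc c)" "v = W *\<^sub>v y" by blast
      have y': "vec c (\<lambda>j. y $ j) \<in> carrier_vec c" by simp
      obtain x where x: "x \<in> carrier_vec r" "W' *\<^sub>v vec c (\<lambda>j. y $ j) = Q' *\<^sub>v x" using inQ[OF y'] by blast
      have "v = Q' *\<^sub>v x + y $ c \<cdot>\<^sub>v (Q' *\<^sub>v t)" using y x Wy wQ by simp
      also have "\<dots> = Q' *\<^sub>v (x + y $ c \<cdot>\<^sub>v t)"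
        using Q' x t by (simp add: mult_add_distrib_mat_vec mult_mat_vec)
      finally have vv: "v = Q' *\<^sub>v (x + y $ c \<cdot>\<^sub>v t)" .
      have "x + y $ c \<cdot>\<^sub>v t \<in> carrier_vec r" using x t by simp
      then show "v \<in> {Q' *\<^sub>v x | x. x \<in> carrier_vec r}" using vv by blast
    qed
    then show ?thesis using Q' QQ by blast
  next
    case False
    define nu where "nu = sqrt (u \<bullet> u)"
    have uu0: "u \<bullet> u \<noteq> 0" using self_sp_zero[of u] False u by auto
    have uu_ge: "u \<bullet> u \<ge> 0" unfolding scalar_prod_def by (intro sum_nonneg) simp
    have nu: "nu > 0" unfolding nu_def using uu0 uu_ge by simp
    have nu2: "nu * nu = u \<bullet> u" unfolding nu_def using uu_ge by simp
    define e where "e = (1 / nu) \<cdot>\<^sub>v u"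
    have e: "e \<in> carrier_vec N" unfolding e_def using u by simp
    have ee: "e \<bullet> e = 1"
    proof -
      have "e \<bullet> e = (1/nu) * ((1/nu) * (u \<bullet> u))" unfolding e_def using u by simp
      also have "\<dots> = 1" using nu2 nu uu0 by (simp add: field_simps)
      finally show ?thesis .
    qed
    have Qe: "transpose_mat Q' *\<^sub>v e = 0\<^sub>v r"
    proof -
      have "transpose_mat Q' *\<^sub>v u = transpose_mat Q' *\<^sub>v w - transpose_mat Q' *\<^sub>v (Q' *\<^sub>v t)"
        unfolding u_def using Q' w t by (simp add: mult_minus_distrib_mat_vec)
      also have "\<dots> = 0\<^sub>v r" using QtQ[OF t] t unfolding t_def[symmetric] by simp
      finally have "transpose_mat Q' *\<^sub>v u = 0\<^sub>v r" .
      moreover have "(1/nu) \<cdot>\<^sub>v 0\<^sub>v r = (0\<^sub>v r :: real vec)" by (intro eq_vecI) auto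
      ultimately show ?thesis unfolding e_def using Q' u by (simp add: mult_mat_vec)
    qed
    define Q where "Q = ext_mat Q' e"
    have Q: "Q \<in> carrier_mat N (Suc r)" unfolding Q_def by (rule ext_mat_carrier[OF Q'])
    have QQ2: "transpose_mat Q * Q = 1\<^sub>m (Suc r)" unfolding Q_def by (rule ortho_ext[OF Q' QQ e Qe ee])
    have Qx: "Q *\<^sub>v x = Q' *\<^sub>v vec r (\<lambda>j. x $ j) + x $ r \<cdot>\<^sub>v e" if "x \<in> carrier_vec (Suc r)" for x
      unfolding Q_def using ext_mv[OF Q' e that] .
    have Qpad: "Q *\<^sub>v pad r x a = Q' *\<^sub>v x + a \<cdot>\<^sub>v e" if "x \<in> carrier_vec r" for x a
      unfolding Q_def using ext_pad[OF Q' e that] .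
    have "{Q *\<^sub>v x | x. x \<in> carrier_vec (Suc r)} = {W *\<^sub>v y | y. y \<in> carrier_vec (Suc c)}"
    proof (rule equalityI; rule subsetI)
      fix v assume "v \<in> {Q *\<^sub>v x | x. x \<in> carrier_vec (Suc r)}"
      then obtain x where x: "x \<in> carrier_vec (Suc r)" "v = Q *\<^sub>v x" by blast
      have x': "vec r (\<lambda>j. x $ j) \<in> carrier_vec r" by simp
      obtain y1 where y1: "y1 \<in> carrier_vec c" "Q' *\<^sub>v vec r (\<lambda>j. x $ j) = W' *\<^sub>v y1" using inW[OF x'] by blast
      obtain y2 where y2: "y2 \<in> carrier_vec c" "Q' *\<^sub>v t = W' *\<^sub>v y2" using inW[OF t] by blast
      define a where "a = x $ r / nu"
      have yc: "y1 - a \<cdot>\<^sub>v y2 \<in> carrier_vec c" using y1 y2 by simp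
      have "W *\<^sub>v pad c (y1 - a \<cdot>\<^sub>v y2) a = W' *\<^sub>v y1 - a \<cdot>\<^sub>v (W' *\<^sub>v y2) + a \<cdot>\<^sub>v w"
        unfolding Wpad[OF yc] using W' y1 y2 by (simp add: mult_minus_distrib_mat_vec mult_mat_vec)
      also have "\<dots> = Q *\<^sub>v x"
      proof (rule eq_vecI)
        fix i assume "i < dim_vec (Q *\<^sub>v x)"
        then have i: "i < N" using Q by simp
        have "(Q *\<^sub>v x) $ i = (W' *\<^sub>v y1) $ i + x $ r * e $ i" unfolding Qx[OF x(1)] y1(2) using i e W' by simp
        also have "\<dots> = (W' *\<^sub>v y1) $ i + x $ r * ((1/nu) * (w $ i - (W' *\<^sub>v y2) $ i))"
          unfolding e_def u_def y2(2)[symmetric] using i w Q' t by simp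
        finally show "(W' *\<^sub>v y1 - a \<cdot>\<^sub>v (W' *\<^sub>v y2) + a \<cdot>\<^sub>v w) $ i = (Q *\<^sub>v x) $ i"
          using i W' w nu unfolding a_def by (simp add: field_simps)
      qed (use Q W' w in simp)
      finally have "v = W *\<^sub>v pad c (y1 - a \<cdot>\<^sub>v y2) a" using x by simp
      then show "v \<in> {W *\<^sub>v y | y. y \<in> carrier_vec (Suc c)}" using pad_carrier by blast
    next
      fix v assume "v \<in> {W *\<^sub>v y | y. y \<in> carrier_vec (Suc c)}"
      then obtain y where y: "y \<in> carrier_vec (Suc c)" "v = W *\<^sub>v y" by blast
      have y': "vec c (\<lambda>j. y $ j) \<in> carrier_vec c" by simp
      obtain x where x: "x \<in> carrier_vec r" "W' *\<^sub>v vec c (\<lambda>j. y $ j) = Q' *\<^sub>v x" using inQ[OF y'] by blast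
      have xc: "x + y $ c \<cdot>\<^sub>v t \<in> carrier_vec r" using x t by simp
      have "Q *\<^sub>v pad r (x + y $ c \<cdot>\<^sub>v t) (y $ c * nu) = Q' *\<^sub>v x + y $ c \<cdot>\<^sub>v (Q' *\<^sub>v t) + (y $ c * nu) \<cdot>\<^sub>v e"
        unfolding Qpad[OF xc] using Q' x t by (simp add: mult_add_distrib_mat_vec mult_mat_vec)
      also have "\<dots> = W *\<^sub>v y"
      proof (rule eq_vecI)
        fix i assume "i < dim_vec (W *\<^sub>v y)"
        then have i: "i < N" using Suc.prems by simp
        have "(W *\<^sub>v y) $ i = (Q' *\<^sub>v x) $ i + y $ c * w $ i" unfolding Wy[OF y(1)] x(2) using i w Q' by simp
        moreover have "w $ i = (Q' *\<^sub>v t) $ i + nu * e $ i"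
          unfolding e_def u_def using i w Q' t nu by simp
        ultimately show "(Q' *\<^sub>v x + y $ c \<cdot>\<^sub>v (Q' *\<^sub>v t) + (y $ c * nu) \<cdot>\<^sub>v e) $ i = (W *\<^sub>v y) $ i"
          using i Q' e nu by (simp add: field_simps)
      qed (use Q' e Suc.prems in simp)
      finally have "v = Q *\<^sub>v pad r (x + y $ c \<cdot>\<^sub>v t) (y $ c * nu)" using y by simp
      then show "v \<in> {Q *\<^sub>v x | x. x \<in> carrier_vec (Suc r)}" using pad_carrier by blast
    qed
    then show ?thesis using Q QQ2 by blast
  qed
qed




definition good :: "nat \<Rightarrow> (nat \<Rightarrow> nat) \<Rightarrow> (nat \<Rightarrow> real vec) \<Rightarrow> bool" where
  "good L n p \<longleftrightarrow> (\<forall>j\<in>{1..L}. p j \<in> carrier_vec (n j))"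

lemma pinv_gen:
  fixes A W :: "real mat"
  assumes A: "A \<in> carrier_mat N N" and Asym: "transpose_mat A = A"
    and Apd: "\<forall>v\<in>carrier_vec N. v \<noteq> 0\<^sub>v N \<longrightarrow> v \<bullet> (A *\<^sub>v v) > 0"
    and W: "W \<in> carrier_mat N c"
  shows "pinv_mat (transpose_mat W * A * W) \<in> carrier_mat c c"
proof -
  obtain r Q where "Q \<in> carrier_mat N r" "transpose_mat Q * Q = 1\<^sub>m r"
     "{Q *\<^sub>v x | x. x \<in> carrier_vec r} = {W *\<^sub>v y | y. y \<in> carrier_vec c}"
    using onb_exists[OF W] by blast
  from pinv_construct[OF A Asym Apd W this] show ?thesis by simp
qed

lemma W_mat_carrier: "W_mat U n N p mu \<in> carrier_mat N (n mu)"
  unfolding W_mat_def by simp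

lemma update_good:
  assumes A: "spd N A" and g: "good L n p"
  shows "good L n (als_update A b U n N p mu)"
proof -
  have A': "A \<in> carrier_mat N N" "transpose_mat A = A"
    "\<forall>v\<in>carrier_vec N. v \<noteq> 0\<^sub>v N \<longrightarrow> v \<bullet> (A *\<^sub>v v) > 0" using A unfolding spd_def by auto
  have P: "pinv_mat (transpose_mat (W_mat U n N p mu) * A * W_mat U n N p mu) \<in> carrier_mat (n mu) (n mu)"
    using pinv_gen[OF A'(1) A'(2) A'(3) W_mat_carrier] .
  have "pinv_mat (transpose_mat (W_mat U n N p mu) * A * W_mat U n N p mu) *\<^sub>v
      (transpose_mat (W_mat U n N p mu) *\<^sub>v b) \<in> carrier_vec (n mu)"
    using P by (intro carrier_vecI) auto
  then show ?thesis using g unfolding good_def als_update_def Let_def by auto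
qed

lemma part_good: "spd N A \<Longrightarrow> good L n p0 \<Longrightarrow> good L n (als_part A b U n N p0 mu)"
  by (induction mu) (auto intro: update_good)

lemma start_good: "spd N A \<Longrightarrow> good L n p1 \<Longrightarrow> good L n (als_start A b U n N L p1 k)"
proof (induction k rule: nat_less_induct)
  case (1 k)
  show ?case
  proof (cases k)
    case 0 then show ?thesis using 1 by simp
  next
    case (Suc k')
    show ?thesis
    proof (cases k')
      case 0 then show ?thesis using 1 Suc by simp
    next
      case (Suc k'')
      then show ?thesis using 1 \<open>k = Suc k'\<close> by (simp add: part_good)
    qed
  qed
qed

lemma W_lin:
  assumes U: "multilinear_map L n N U" and g: "good L n p" and mu: "mu \<in> {1..L}"
    and q: "q \<in> carrier_vec (n mu)"
  shows "U (p(mu := q)) = W_mat U n N p mu *\<^sub>v q"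
proof -
  have gp: "\<forall>j\<in>{1..L}. p j \<in> carrier_vec (n j)" using g unfolding good_def .
  have car: "U (p(mu := x)) \<in> carrier_vec N" if "x \<in> carrier_vec (n mu)" for x
    using U that gp unfolding multilinear_map_def by auto
  have lin: "U (p(mu := a \<cdot>\<^sub>v x + c \<cdot>\<^sub>v y)) = a \<cdot>\<^sub>v U (p(mu := x)) + c \<cdot>\<^sub>v U (p(mu := y))"
    if "x \<in> carrier_vec (n mu)" "y \<in> carrier_vec (n mu)" for x y a c
    using U that gp mu unfolding multilinear_map_def by blast
  define s where "s k = vec (n mu) (\<lambda>i. if i < k then q $ i else 0)" for k
  define W where "W = W_mat U n N p mu"
  have Wij: "W $$ (i,j) = U (p(mu := unit_vec (n mu) j)) $ i" if "i < N" "j < n mu" for i j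
    using that unfolding W_def W_mat_def W_map_def by simp
  have claim: "k \<le> n mu \<Longrightarrow> U (p(mu := s k)) = vec N (\<lambda>i. \<Sum>j\<in>{0..<k}. W $$ (i,j) * q $ j)" for k
  proof (induction k)
    case 0
    have z: "s 0 = 0 \<cdot>\<^sub>v 0\<^sub>v (n mu) + 0 \<cdot>\<^sub>v 0\<^sub>v (n mu)" unfolding s_def by (intro eq_vecI) auto
    have "U (p(mu := s 0)) = 0 \<cdot>\<^sub>v U (p(mu := 0\<^sub>v (n mu))) + 0 \<cdot>\<^sub>v U (p(mu := 0\<^sub>v (n mu)))"
      unfolding z by (rule lin) auto
    also have "\<dots> = vec N (\<lambda>i. \<Sum>j\<in>{0..<0}. W $$ (i,j) * q $ j)"
      using car[of "0\<^sub>v (n mu)"] by (intro eq_vecI) auto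
    finally show ?case .
  next
    case (Suc k)
    then have k: "k < n mu" by simp
    have e: "s (Suc k) = 1 \<cdot>\<^sub>v s k + (q $ k) \<cdot>\<^sub>v unit_vec (n mu) k"
      unfolding s_def using k by (intro eq_vecI) (auto simp: less_Suc_eq)
    have sk: "s k \<in> carrier_vec (n mu)" unfolding s_def by simp
    have "U (p(mu := s (Suc k))) = 1 \<cdot>\<^sub>v U (p(mu := s k)) + (q $ k) \<cdot>\<^sub>v U (p(mu := unit_vec (n mu) k))"
      unfolding e by (rule lin[OF sk]) simp
    also have "\<dots> = vec N (\<lambda>i. \<Sum>j\<in>{0..<Suc k}. W $$ (i,j) * q $ j)"
    proof (rule eq_vecI)
      fix i assume "i < dim_vec (vec N (\<lambda>i. \<Sum>j\<in>{0..<Suc k}. W $$ (i,j) * q $ j))"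
      then have i: "i < N" by simp
      have IH: "U (p(mu := s k)) = vec N (\<lambda>i. \<Sum>j\<in>{0..<k}. W $$ (i,j) * q $ j)"
        using Suc.IH k unfolding fun_upd_def by simp
      have hi: "U (p(mu := s k)) $ i = (\<Sum>j\<in>{0..<k}. W $$ (i,j) * q $ j)"
        unfolding IH using i by simp
      show "(1 \<cdot>\<^sub>v U (p(mu := s k)) + (q $ k) \<cdot>\<^sub>v U (p(mu := unit_vec (n mu) k))) $ i =
        vec N (\<lambda>i. \<Sum>j\<in>{0..<Suc k}. W $$ (i,j) * q $ j) $ i"
        using i hi k car[of "unit_vec (n mu) k"] car[OF sk] Wij[OF i k] by simp
    qed (use car[OF sk] car[of "unit_vec (n mu) k"] in simp)
    finally show ?case .
  qed
  have "s (n mu) = q" unfolding s_def using q by (intro eq_vecI) auto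
  then have "U (p(mu := q)) = vec N (\<lambda>i. \<Sum>j\<in>{0..<n mu}. W $$ (i,j) * q $ j)" using claim by auto
  also have "\<dots> = W *\<^sub>v q"
    using q unfolding W_def W_mat_def by (intro eq_vecI) (auto simp: scalar_prod_def)
  finally show ?thesis unfolding W_def .
qed




lemma quad_id:
  fixes A :: "real mat"
  assumes A: "A \<in> carrier_mat N N" and As: "transpose_mat A = A"
    and v0: "v0 \<in> carrier_vec N" and d: "d \<in> carrier_vec N" and b: "b \<in> carrier_vec N"
    and orth: "(A *\<^sub>v (v0 + d) - b) \<bullet> d = 0"
  shows "f_obj A b (v0 + d) - f_obj A b v0 = -(1/(2*(b \<bullet> b))) * (d \<bullet> (b - A *\<^sub>v v0))"
proof -
  have a0: "A *\<^sub>v v0 \<in> carrier_vec N" and ad: "A *\<^sub>v d \<in> carrier_vec N" using A v0 d by auto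
  have Av: "A *\<^sub>v (v0 + d) = A *\<^sub>v v0 + A *\<^sub>v d" using A v0 d by (simp add: mult_add_distrib_mat_vec)
  have e1: "(A *\<^sub>v (v0 + d)) \<bullet> (v0 + d) = (A *\<^sub>v v0) \<bullet> v0 + (A *\<^sub>v v0) \<bullet> d + (A *\<^sub>v d) \<bullet> v0 + (A *\<^sub>v d) \<bullet> d"
    unfolding Av using a0 ad v0 d
    by (simp add: scalar_prod_add_distrib[of _ N] add_scalar_prod_distrib[of _ N])
  have sym: "(A *\<^sub>v d) \<bullet> v0 = (A *\<^sub>v v0) \<bullet> d"
  proof -
    have "(transpose_mat A *\<^sub>v d) \<bullet> v0 = d \<bullet> (A *\<^sub>v v0)" using A v0 d by (intro tr_sp) auto
    then show ?thesis using As comm_scalar_prod[OF d a0] by simp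
  qed
  have e2: "b \<bullet> (v0 + d) = b \<bullet> v0 + b \<bullet> d" using b v0 d by (simp add: scalar_prod_add_distrib[of _ N])
  have e3: "(A *\<^sub>v (v0 + d) - b) \<bullet> d = (A *\<^sub>v v0) \<bullet> d + (A *\<^sub>v d) \<bullet> d - b \<bullet> d"
    unfolding Av using a0 ad b d
    by (simp add: minus_scalar_prod_distrib[of _ N] add_scalar_prod_distrib[of _ N])
  have e4: "d \<bullet> (b - A *\<^sub>v v0) = b \<bullet> d - (A *\<^sub>v v0) \<bullet> d"
    using a0 b d by (simp add: scalar_prod_minus_distrib[of _ N] comm_scalar_prod[of _ N])
  have inner: "(1/2) * ((A *\<^sub>v (v0 + d)) \<bullet> (v0 + d)) - b \<bullet> (v0 + d) - ((1/2) * ((A *\<^sub>v v0) \<bullet> v0) - b \<bullet> v0)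
      = -(1/2) * (d \<bullet> (b - A *\<^sub>v v0))"
    unfolding e1 e2 e4 sym using orth unfolding e3 by (simp add: algebra_simps)
  have "f_obj A b (v0 + d) - f_obj A b v0 = (1 / (b \<bullet> b)) *
     ((1/2) * ((A *\<^sub>v (v0 + d)) \<bullet> (v0 + d)) - b \<bullet> (v0 + d) - ((1/2) * ((A *\<^sub>v v0) \<bullet> v0) - b \<bullet> v0))"
    unfolding f_obj_def by (simp add: algebra_simps)
  also have "\<dots> = -(1/(2*(b \<bullet> b))) * (d \<bullet> (b - A *\<^sub>v v0))" unfolding inner by simp
  finally show ?thesis .
qed




theorem mainTheorem7:
  fixes d :: nat and m :: "nat \<Rightarrow> nat" and N L :: nat and n :: "nat \<Rightarrow> nat"
    and A :: "real mat" and b :: "real vec"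
    and U :: "(nat \<Rightarrow> real vec) \<Rightarrow> real vec" and p1 :: "nat \<Rightarrow> real vec"
    and k mu r :: nat and Q :: "real mat"
  assumes N_def: "N = (\<Prod>\<nu>\<in>{1..d}. m \<nu>)"
    and L_ge: "L \<ge> d"
    and A_spd: "spd N A"
    and b_dim: "b \<in> carrier_vec N" and b_nz: "b \<noteq> 0\<^sub>v N"
    and U_ml: "multilinear_map L n N U"
    and p1_dim: "\<forall>j\<in>{1..L}. p1 j \<in> carrier_vec (n j)"
    and k_ge: "k \<ge> 1"
    and mu_lt: "mu < L"
    and Q_dim: "Q \<in> carrier_mat N r"
    and Q_orth: "\<forall>i<r. \<forall>j<r. col Q i \<bullet> col Q j = (if i = j then 1 else 0)"
    and Q_span: "{Q *\<^sub>v x | x. x \<in> carrier_vec r} =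
       W_map U (als_state A b U n N L p1 k mu) (Suc mu) ` carrier_vec (n (Suc mu))"
  shows "f_obj A b (U (als_state A b U n N L p1 k (Suc mu))) - f_obj A b (U (als_state A b U n N L p1 k mu))
     = - (1 / (2 * (b \<bullet> b))) *
        ((Q * inv_mat (transpose_mat Q * A * Q) * transpose_mat Q *\<^sub>v
            (b - A *\<^sub>v U (als_state A b U n N L p1 k mu))) \<bullet>
          (b - A *\<^sub>v U (als_state A b U n N L p1 k mu)))"
proof -
  have Ac: "A \<in> carrier_mat N N" and As: "transpose_mat A = A"
    and Apd: "\<forall>v\<in>carrier_vec N. v \<noteq> 0\<^sub>v N \<longrightarrow> v \<bullet> (A *\<^sub>v v) > 0"
    using A_spd unfolding spd_def by auto
  have g1: "good L n p1" using p1_dim unfolding good_def .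
  define p where "p = als_state A b U n N L p1 k mu"
  have gp: "good L n p" unfolding p_def als_state_def
    by (rule part_good[OF A_spd start_good[OF A_spd g1]])
  define mm where "mm = Suc mu"
  have mm: "mm \<in> {1..L}" unfolding mm_def using mu_lt by simp
  define W where "W = W_mat U n N p mm"
  have Wc: "W \<in> carrier_mat N (n mm)" unfolding W_def by (rule W_mat_carrier)
  define X where "X = pinv_mat (transpose_mat W * A * W)"
  define qs where "qs = X *\<^sub>v (transpose_mat W *\<^sub>v b)"
  have nxt: "als_state A b U n N L p1 k (Suc mu) = p(mm := qs)"
    unfolding als_state_def als_part.simps p_def[unfolded als_state_def, symmetric]
    unfolding als_update_def Let_def qs_def X_def W_def mm_def ..
  have Xc: "X \<in> carrier_mat (n mm) (n mm)" unfolding X_def by (rule pinv_gen[OF Ac As Apd Wc])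
  have qs: "qs \<in> carrier_vec (n mm)" unfolding qs_def using Xc Wc b_dim by simp
  have v1: "U (p(mm := qs)) = W *\<^sub>v qs" unfolding W_def by (rule W_lin[OF U_ml gp mm qs])
  have pm: "p mm \<in> carrier_vec (n mm)" using gp mm unfolding good_def by blast
  have v0: "U p = W *\<^sub>v p mm"
    using W_lin[OF U_ml gp mm pm] unfolding W_def by simp
  have sp: "{Q *\<^sub>v x | x. x \<in> carrier_vec r} = {W *\<^sub>v y | y. y \<in> carrier_vec (n mm)}"
  proof -
    have "W_map U p mm ` carrier_vec (n mm) = {W *\<^sub>v y | y. y \<in> carrier_vec (n mm)}"
      unfolding W_map_def W_def using W_lin[OF U_ml gp mm] by auto
    then show ?thesis using Q_span unfolding p_def mm_def by simp
  qed
  have QQ: "transpose_mat Q * Q = 1\<^sub>m r"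
    using Q_dim Q_orth by (intro eq_matI) auto
  define G where "G = transpose_mat Q * A * Q"
  define H where "H = inv_mat G"
  have GH: "H \<in> carrier_mat r r" "G * H = 1\<^sub>m r" "H * G = 1\<^sub>m r"
    using G_props[OF Ac Apd Q_dim QQ] unfolding G_def H_def by auto
  have Gc: "G \<in> carrier_mat r r" unfolding G_def using Q_dim Ac by simp
  have WXW: "W * X * transpose_mat W = Q * H * transpose_mat Q"
    using pinv_construct[OF Ac As Apd Wc Q_dim QQ sp] unfolding X_def H_def G_def by simp
  have v1': "W *\<^sub>v qs = Q *\<^sub>v (H *\<^sub>v (transpose_mat Q *\<^sub>v b))"
  proof -
    have "W *\<^sub>v qs = (W * X * transpose_mat W) *\<^sub>v b"
      unfolding qs_def using carrier_matD[OF Wc] carrier_matD[OF Xc] carrier_vecD[OF b_dim] by (simp add: assoc_mmv)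
    also have "\<dots> = Q *\<^sub>v (H *\<^sub>v (transpose_mat Q *\<^sub>v b))"
      unfolding WXW using carrier_matD[OF Q_dim] carrier_matD[OF GH(1)] carrier_vecD[OF b_dim] by (simp add: assoc_mmv)
    finally show ?thesis .
  qed
  obtain y0 where y0: "y0 \<in> carrier_vec r" "W *\<^sub>v p mm = Q *\<^sub>v y0"
  proof -
    have "W *\<^sub>v p mm \<in> {W *\<^sub>v y | y. y \<in> carrier_vec (n mm)}" using pm by blast
    then show ?thesis unfolding sp[symmetric] using that by blast
  qed
  define res where "res = b - A *\<^sub>v U p"
  have res: "res \<in> carrier_vec N" unfolding res_def v0 y0(2) using b_dim Ac Q_dim y0 by simp
  define z where "z = H *\<^sub>v (transpose_mat Q *\<^sub>v res)"
  have z: "z \<in> carrier_vec r" unfolding z_def using GH(1) Q_dim res by simp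
  define dd where "dd = Q * H * transpose_mat Q *\<^sub>v res"
  have ddz: "dd = Q *\<^sub>v z" unfolding dd_def z_def
    using carrier_matD[OF Q_dim] carrier_matD[OF GH(1)] carrier_vecD[OF res] by (simp add: assoc_mmv)
  have dd: "dd \<in> carrier_vec N" unfolding ddz using Q_dim z by simp
  have HGy: "H *\<^sub>v (transpose_mat Q *\<^sub>v (A *\<^sub>v (Q *\<^sub>v y0))) = y0"
  proof -
    have "H *\<^sub>v (transpose_mat Q *\<^sub>v (A *\<^sub>v (Q *\<^sub>v y0))) = (H * G) *\<^sub>v y0"
      unfolding G_def using carrier_matD[OF Q_dim] carrier_matD[OF GH(1)] carrier_matD[OF Ac] carrier_vecD[OF y0(1)] by (simp add: assoc_mmv)
    then show ?thesis using GH(3) y0 by simp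
  qed
  have zeq: "z = H *\<^sub>v (transpose_mat Q *\<^sub>v b) - y0"
  proof -
    have "z = H *\<^sub>v (transpose_mat Q *\<^sub>v b - transpose_mat Q *\<^sub>v (A *\<^sub>v (Q *\<^sub>v y0)))"
      unfolding z_def res_def v0 y0(2) using Q_dim Ac y0 b_dim by (simp add: mult_minus_distrib_mat_vec)
    also have "\<dots> = H *\<^sub>v (transpose_mat Q *\<^sub>v b) - H *\<^sub>v (transpose_mat Q *\<^sub>v (A *\<^sub>v (Q *\<^sub>v y0)))"
      using GH(1) Q_dim Ac y0 b_dim by (simp add: mult_minus_distrib_mat_vec)
    finally show ?thesis unfolding HGy .
  qed
  have v1eq: "U (p(mm := qs)) = U p + dd"
  proof -
    have "dd = Q *\<^sub>v (H *\<^sub>v (transpose_mat Q *\<^sub>v b)) - Q *\<^sub>v y0"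
      unfolding ddz zeq using Q_dim GH(1) b_dim y0 by (simp add: mult_minus_distrib_mat_vec)
    then have "dd = U (p(mm := qs)) - U p" unfolding v1 v1' v0 y0(2) .
    moreover have "U (p(mm := qs)) \<in> carrier_vec N" unfolding v1 using Wc qs by simp
    moreover have "U p \<in> carrier_vec N" unfolding v0 using Wc pm by simp
    ultimately show ?thesis by (intro eq_vecI) auto
  qed
  have orth: "(A *\<^sub>v (U p + dd) - b) \<bullet> dd = 0"
  proof -
    have Up: "U p + dd \<in> carrier_vec N" using dd v0 Wc pm by simp
    have w: "A *\<^sub>v (U p + dd) - b \<in> carrier_vec N" using Ac Up b_dim by simp
    have "(A *\<^sub>v (U p + dd) - b) \<bullet> dd = (transpose_mat Q *\<^sub>v (A *\<^sub>v (U p + dd) - b)) \<bullet> z"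
      unfolding ddz using Q_dim z w b_dim by (intro tr_sp[symmetric]) auto
    also have "transpose_mat Q *\<^sub>v (A *\<^sub>v (U p + dd) - b) = 0\<^sub>v r"
    proof -
      have "A *\<^sub>v (U p + dd) = A *\<^sub>v (Q *\<^sub>v (H *\<^sub>v (transpose_mat Q *\<^sub>v b)))"
        unfolding v1eq[symmetric] v1 v1' ..
      then have "transpose_mat Q *\<^sub>v (A *\<^sub>v (U p + dd) - b)
          = transpose_mat Q *\<^sub>v (A *\<^sub>v (Q *\<^sub>v (H *\<^sub>v (transpose_mat Q *\<^sub>v b)))) - transpose_mat Q *\<^sub>v b"
        using Q_dim Ac GH(1) b_dim by (simp add: mult_minus_distrib_mat_vec)
      also have "transpose_mat Q *\<^sub>v (A *\<^sub>v (Q *\<^sub>v (H *\<^sub>v (transpose_mat Q *\<^sub>v b)))) = (G * H) *\<^sub>v (transpose_mat Q *\<^sub>v b)"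
        unfolding G_def using carrier_matD[OF Q_dim] carrier_matD[OF GH(1)] carrier_matD[OF Ac] carrier_vecD[OF b_dim] by (simp add: assoc_mmv)
      also have "\<dots> = transpose_mat Q *\<^sub>v b" using GH(2) Q_dim b_dim by simp
      finally show ?thesis using Q_dim b_dim by simp
    qed
    finally show ?thesis using z by simp
  qed
  have "f_obj A b (U p + dd) - f_obj A b (U p) = -(1/(2*(b \<bullet> b))) * (dd \<bullet> (b - A *\<^sub>v U p))"
    using quad_id[OF Ac As _ dd b_dim orth] v0 Wc pm by simp
  then show ?thesis unfolding nxt v1eq dd_def res_def p_def[symmetric] by (simp add: H_def G_def)
qed


end
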